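(* Let $G$ be the path $P_n$ or the cycle $C_n$ with $n\geq 3$, and let $c_0:V(G)\to\mathbb{Z}$ be any initial chip configuration. Then the sequence of configurations $(c_t)_{t\geq 0}$ produced by the diffusion process is eventually periodic, i.e. there exist integers $t\geq 0$ and $p\geq 1$ with $c_{t+p}=c_t$.
   Context: Diffusion process: for a finite simple graph $G$ and a chip configuration $c_t:V(G)\to\mathbb{Z}$ (negative values allowed), the next configuration is defined simultaneously for every vertex $u$ by $c_{t+1}(u)=c_t(u)-|\{w\in N(u): c_t(u)>c_t(w)\}|+|\{w\in N(u): c_t(u)<c_t(w)\}|$. That is, every vertex sends one chip to each neighbour having strictly fewer chips. *)

theory Defs
  imports Main
begin

text \<open>A finite simple graph is given by a finite vertex set V and a symmetric,
irreflexive adjacency relation adj. Neighbourhood of u: the w in V with adj u w.\<close>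

definition nbrs :: "'a set \<Rightarrow> ('a \<Rightarrow> 'a \<Rightarrow> bool) \<Rightarrow> 'a \<Rightarrow> 'a set" where
  "nbrs V adj u = {w \<in> V. adj u w}"

definition diffusion_step ::
  "'a set \<Rightarrow> ('a \<Rightarrow> 'a \<Rightarrow> bool) \<Rightarrow> ('a \<Rightarrow> int) \<Rightarrow> ('a \<Rightarrow> int)" where
  "diffusion_step V adj c = (\<lambda>u. if u \<in> V then
      c u - int (card {w \<in> nbrs V adj u. c u > c w})
          + int (card {w \<in> nbrs V adj u. c u < c w})
    else c u)"

definition diffusion :: "'a set \<Rightarrow> ('a \<Rightarrow> 'a \<Rightarrow> bool) \<Rightarrow> ('a \<Rightarrow> int) \<Rightarrow> nat \<Rightarrow> ('a \<Rightarrow> int)" where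
  "diffusion V adj c0 t = (diffusion_step V adj ^^ t) c0"

definition path_adj :: "nat \<Rightarrow> nat \<Rightarrow> bool" where
  "path_adj i j \<longleftrightarrow> j = i + 1 \<or> i = j + 1"

definition cycle_adj :: "nat \<Rightarrow> nat \<Rightarrow> nat \<Rightarrow> bool" where
  "cycle_adj n i j \<longleftrightarrow> i \<noteq> j \<and> (j = (i + 1) mod n \<or> i = (j + 1) mod n)"

end

theory Submission
  imports Defs
begin

definition J :: "nat set \<Rightarrow> (nat \<Rightarrow> nat \<Rightarrow> bool) \<Rightarrow> int \<Rightarrow> (nat \<Rightarrow> int) \<Rightarrow> bool" where
  "J V adj K c \<longleftrightarrow> (\<forall>v\<in>V. c v \<le> K+1 \<and> (c v = K+1 \<longrightarrow> 2 \<le> card (nbrs V adj v) \<and> (\<forall>w\<in>nbrs V adj v. c w \<le> K-1)))"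

locale dg =
  fixes V :: "nat set" and adj :: "nat \<Rightarrow> nat \<Rightarrow> bool"
  assumes finV: "finite V"
    and sym: "\<And>u w. adj u w \<Longrightarrow> adj w u"
    and deg: "\<And>u. u \<in> V \<Longrightarrow> card (nbrs V adj u) \<le> 2"
begin

lemma finN: "finite (nbrs V adj u)"
  using finV unfolding nbrs_def by auto

lemma nb_sym: "u \<in> V \<Longrightarrow> w \<in> nbrs V adj u \<Longrightarrow> u \<in> nbrs V adj w"
  unfolding nbrs_def using sym by auto

lemma cardHL: fixes c :: "nat \<Rightarrow> int" shows "card {w \<in> nbrs V adj u. c u > c w} + card {w \<in> nbrs V adj u. c u < c w} \<le> card (nbrs V adj u)"
proof -
  have "card {w \<in> nbrs V adj u. c u > c w} + card {w \<in> nbrs V adj u. c u < c w}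
        = card ({w \<in> nbrs V adj u. c u > c w} \<union> {w \<in> nbrs V adj u. c u < c w})"
    by (rule card_Un_disjoint[symmetric]) (use finN in auto)
  also have "\<dots> \<le> card (nbrs V adj u)"
    by (rule card_mono[OF finN]) auto
  finally show ?thesis .
qed

lemma B: "J V adj K c \<Longrightarrow> u \<in> V \<Longrightarrow> w \<in> nbrs V adj u \<Longrightarrow> c w = K+1 \<Longrightarrow> c u \<le> K-1"
  unfolding J_def using nb_sym by (metis (no_types, lifting) mem_Collect_eq nbrs_def)

lemma top_case: assumes "J V adj K c" "u \<in> V" "c u = K+1"
  shows "diffusion_step V adj c u \<le> K-1"
proof -
  have nb: "\<forall>w\<in>nbrs V adj u. c w \<le> K-1" and d: "2 \<le> card (nbrs V adj u)"
    using assms unfolding J_def by auto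
  have h1: "{w \<in> nbrs V adj u. c u > c w} = nbrs V adj u" using nb assms(3) by force
  have h2: "{w \<in> nbrs V adj u. c u < c w} = {}" using nb assms(3) by force
  have "diffusion_step V adj c u = c u - int (card {w \<in> nbrs V adj u. c u > c w}) + int (card {w \<in> nbrs V adj u. c u < c w})"
    using assms(2) unfolding diffusion_step_def by simp
  then show ?thesis using assms(3) d unfolding h1 h2 card.empty by linarith
qed

lemma K_case: assumes "J V adj K c" "u \<in> V" "c u = K"
  shows "diffusion_step V adj c u \<le> K - int (card {w \<in> nbrs V adj u. c u > c w})"
proof -
  have h2: "{w \<in> nbrs V adj u. c u < c w} = {}"
  proof (rule ccontr)
    assume "{w \<in> nbrs V adj u. c u < c w} \<noteq> {}"
    then obtain w where w: "w \<in> nbrs V adj u" "c u < c w" by auto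
    have "w \<in> V" using w unfolding nbrs_def by auto
    then have "c w \<le> K+1" using assms(1) unfolding J_def by auto
    then have "c w = K+1" using w assms(3) by auto
    then show False using B[OF assms(1,2) w(1)] assms(3) by auto
  qed
  have "diffusion_step V adj c u = c u - int (card {w \<in> nbrs V adj u. c u > c w}) + int (card {w \<in> nbrs V adj u. c u < c w})"
    using assms(2) unfolding diffusion_step_def by simp
  then show ?thesis using assms(3) unfolding h2 card.empty by linarith
qed

lemma J_step: assumes "J V adj K c" shows "J V adj K (diffusion_step V adj c)"
  unfolding J_def
proof
  fix u assume u: "u \<in> V"
  let ?N = "nbrs V adj u"
  let ?L = "{w \<in> ?N. c u > c w}" and ?H = "{w \<in> ?N. c u < c w}"
  have st: "diffusion_step V adj c u = c u - int (card ?L) + int (card ?H)"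
    using u unfolding diffusion_step_def by simp
  have hl: "card ?L + card ?H \<le> card ?N" by (rule cardHL)
  have dg: "card ?N \<le> 2" using deg u .
  have cu: "c u \<le> K+1" using assms u unfolding J_def by auto
  consider "c u = K+1" | "c u = K" | "c u = K-1" | "c u \<le> K-2" using cu by linarith
  then show "diffusion_step V adj c u \<le> K+1 \<and> (diffusion_step V adj c u = K+1 \<longrightarrow>
      2 \<le> card ?N \<and> (\<forall>w\<in>?N. diffusion_step V adj c w \<le> K-1))"
  proof cases
    case 1 then show ?thesis using top_case[OF assms u] by simp
  next
    case 2 then show ?thesis using K_case[OF assms u] by simp
  next
    case 3
    have le: "diffusion_step V adj c u \<le> K+1" using st hl dg 3 by linarith
    moreover have "2 \<le> card ?N \<and> (\<forall>w\<in>?N. diffusion_step V adj c w \<le> K-1)"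
      if eq: "diffusion_step V adj c u = K+1"
    proof -
      have cH: "card ?H = 2" "card ?L = 0" using st hl dg 3 eq by linarith+
      then have c2: "2 \<le> card ?N" using hl by linarith
      have "?H = ?N"
        using card_subset_eq[OF finN, of ?H] cH hl dg by fastforce
      then have HN: "?H = ?N" .
      have ge: "\<forall>w\<in>?N. c w \<ge> K"
      proof
        fix w assume "w \<in> ?N"
        then have "w \<in> ?H" using HN by blast
        then show "c w \<ge> K" using 3 by simp
      qed
      have "diffusion_step V adj c w \<le> K-1" if w: "w \<in> ?N" for w
      proof -
        have wV: "w \<in> V" using w unfolding nbrs_def by auto
        have cw: "c w \<le> K+1" using assms wV unfolding J_def by auto
        have "c w = K+1 \<or> c w = K" using cw ge w by force
        then show ?thesis
        proof
          assume "c w = K+1" then show ?thesis using top_case[OF assms wV] by simp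
        next
          assume cwK: "c w = K"
          have "u \<in> {x \<in> nbrs V adj w. c w > c x}" using nb_sym[OF u w] cwK 3 by auto
          then have "card {x \<in> nbrs V adj w. c w > c x} \<ge> 1"
            using finN by (metis (no_types, lifting) One_nat_def Suc_leI card_gt_0_iff empty_iff finite_subset mem_Collect_eq subsetI)
          then show ?thesis using K_case[OF assms wV cwK] by linarith
        qed
      qed
      then show ?thesis using c2 by blast
    qed
    ultimately show ?thesis by blast
  next
    case 4 then show ?thesis using st hl dg by linarith
  qed
qed

lemma diffusion_Suc: "diffusion V adj c0 (Suc t) = diffusion_step V adj (diffusion V adj c0 t)"
  unfolding diffusion_def by simp

lemma upper: assumes "\<forall>v\<in>V. c0 v \<le> K" shows "\<forall>v\<in>V. diffusion V adj c0 t v \<le> K+1"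
proof -
  have "J V adj K (diffusion V adj c0 t)"
  proof (induction t)
    case 0 then show ?case using assms unfolding J_def diffusion_def by force
  next
    case (Suc t) then show ?case using J_step diffusion_Suc by simp
  qed
  then show ?thesis unfolding J_def by blast
qed

lemma neg_step: "diffusion_step V adj (\<lambda>u. - c u) = (\<lambda>u. - diffusion_step V adj c u)"
proof
  fix u
  have e1: "{w \<in> nbrs V adj u. - c u > - c w} = {w \<in> nbrs V adj u. c u < c w}" by auto
  have e2: "{w \<in> nbrs V adj u. - c u < - c w} = {w \<in> nbrs V adj u. c u > c w}" by auto
  show "diffusion_step V adj (\<lambda>u. - c u) u = - diffusion_step V adj c u"
    unfolding diffusion_step_def e1 e2 by simp
qed

lemma neg_diff: "diffusion V adj (\<lambda>u. - c u) t = (\<lambda>u. - diffusion V adj c t u)"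
proof (induction t)
  case 0 then show ?case by (simp add: diffusion_def)
next
  case (Suc t) then show ?case by (simp add: diffusion_Suc neg_step)
qed

lemma lower: assumes "\<forall>v\<in>V. c0 v \<ge> k" shows "\<forall>v\<in>V. diffusion V adj c0 t v \<ge> k-1"
proof -
  have "\<forall>v\<in>V. diffusion V adj (\<lambda>u. - c0 u) t v \<le> -k+1"
    by (rule upper) (use assms in auto)
  then have "\<forall>v\<in>V. - diffusion V adj c0 t v \<le> -k+1" using neg_diff[of c0 t] by simp
  then show ?thesis by force
qed

end

lemma periodic_bounded:
  fixes f :: "nat \<Rightarrow> 'b" assumes "finite S" "\<And>t. f t \<in> S"
  shows "\<exists>i j. i < j \<and> f i = f j"
proof (rule ccontr)
  assume "\<not> ?thesis"
  then have ne: "\<And>i j. i < j \<Longrightarrow> f i \<noteq> f j" by blast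
  have "inj f"
  proof (rule injI)
    fix x y assume "f x = f y"
    then show "x = y" using ne[of x y] ne[of y x] by (cases x y rule: linorder_cases) auto
  qed
  moreover have "range f \<subseteq> S" using assms(2) by blast
  then have "finite (range f)" using assms(1) finite_subset by blast
  ultimately have "finite (UNIV :: nat set)" using finite_imageD by blast
  then show False by simp
qed


lemma card2: "card {a, b::nat} \<le> 2" by (cases "a = b") auto

lemma cyc_pred: fixes w n u :: nat assumes "w < n" "u < n" "(w + 1) mod n = u" shows "w = (u + n - 1) mod n"
proof (cases "w + 1 < n")
  case True then have "(w + 1) mod n = w + 1" using True by simp
  then have "u = w + 1" using assms by simp
  then have "u + n - 1 = w + n" by simp
  then show ?thesis using assms by simp
next
  case False then have "w + 1 = n" using assms by simp
  then have "u = 0" using assms by simp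
  then show ?thesis using \<open>w + 1 = n\<close> by simp
qed

lemma dg_inst: assumes "adj = path_adj \<or> adj = cycle_adj n" shows "dg {0..<n} adj"
proof
  show "finite {0..<n}" by simp
  show "adj u w \<Longrightarrow> adj w u" for u w using assms unfolding path_adj_def cycle_adj_def by auto
  fix u assume u: "u \<in> {0..<n}"
  from assms show "card (nbrs {0..<n} adj u) \<le> 2"
  proof
    assume a: "adj = path_adj"
    have "nbrs {0..<n} adj u \<subseteq> {u+1, u-1}" unfolding a nbrs_def path_adj_def by auto
    then show ?thesis using card_mono[of "{u+1, u-1}"] card2 le_trans by blast
  next
    assume a: "adj = cycle_adj n"
    have "nbrs {0..<n} adj u \<subseteq> {(u+1) mod n, (u+n-1) mod n}"
    proof
      fix w assume "w \<in> nbrs {0..<n} adj u"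
      then have w: "w < n" "w = (u + 1) mod n \<or> u = (w + 1) mod n"
        unfolding a nbrs_def cycle_adj_def by auto
      show "w \<in> {(u+1) mod n, (u+n-1) mod n}"
      proof (cases "w = (u + 1) mod n")
        case True then show ?thesis by simp
      next
        case False
        then have "u = (w + 1) mod n" using w by simp
        then have "w = (u + n - 1) mod n" using cyc_pred[of w n u] w u by simp
        then show ?thesis by simp
      qed
    qed
    then show ?thesis using card_mono[of "{(u+1) mod n, (u+n-1) mod n}"] card2 le_trans by blast
  qed
qed

theorem theorem7:
  fixes n :: nat and adj :: "nat \<Rightarrow> nat \<Rightarrow> bool" and c0 :: "nat \<Rightarrow> int"
  assumes "n \<ge> 3"
    and "adj = path_adj \<or> adj = cycle_adj n"
  shows "\<exists>t p. p \<ge> 1 \<and>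
           (\<forall>u\<in>{0..<n}. diffusion {0..<n} adj c0 (t + p) u = diffusion {0..<n} adj c0 t u)"
proof -
  interpret dg "{0..<n}" adj using dg_inst[OF assms(2)] .
  define M where "M = Max (c0 ` {0..<n})"
  define m where "m = Min (c0 ` {0..<n})"
  have up: "\<forall>v\<in>{0..<n}. diffusion {0..<n} adj c0 t v \<le> M+1" for t
    by (rule upper) (auto simp: M_def)
  have lo: "\<forall>v\<in>{0..<n}. diffusion {0..<n} adj c0 t v \<ge> m-1" for t
    by (rule lower) (auto simp: m_def)
  define g where "g t = map (diffusion {0..<n} adj c0 t) [0..<n]" for t
  define S where "S = {xs. set xs \<subseteq> {m-1..M+1} \<and> length xs = n}"
  have fS: "finite S" unfolding S_def by (rule finite_lists_length_eq) simp
  have gS: "g t \<in> S" for t using up[of t] lo[of t] unfolding S_def g_def by auto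
  obtain i j where ij: "i < j" "g i = g j" using periodic_bounded[OF fS gS] by blast
  show ?thesis
  proof (intro exI conjI)
    show "j - i \<ge> 1" using ij by simp
    show "\<forall>u\<in>{0..<n}. diffusion {0..<n} adj c0 (i + (j - i)) u = diffusion {0..<n} adj c0 i u"
    proof
      fix u assume u: "u \<in> {0..<n}"
      have "g j ! u = g i ! u" using ij by simp
      then show "diffusion {0..<n} adj c0 (i + (j - i)) u = diffusion {0..<n} adj c0 i u"
        using u ij(1) unfolding g_def by simp
    qed
  qed
qed

end
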